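(* Let $n\ge1$, $\rho\in\mathbb{R}$ with $3+n-3n\rho\neq0$, and let $Q_n$ be the quaternion Lie group with Lie algebra basis $e_1,\dots,e_{4n+3}$ as in the context. Let $g_0$ be a left-invariant metric diagonal in this basis with $g_j(0)=g_1(0)$ for $1\le j\le 4n$, $g_{4n+1}(0)=g_{4n+2}(0)=g_{4n+3}(0)$, and $g_1(0)^2=g_{4n+1}(0)$. Let $g(t)$ be the diagonal left-invariant metric with $g_j(t)=g_1(0)(1+ct)^{\frac{3(1-2n\rho)}{6+2n-6n\rho}}$ ($1\le j\le 4n$), $g_{4n+k}(t)=g_{4n+1}(0)(1+ct)^{\frac{-n(1+3\rho)}{3+n-3n\rho}}$ ($1\le k\le3$), $c=\frac{g_{4n+1}(0)}{g_1(0)^2}(6+2n-6n\rho)$, which is the solution of the Ricci–Bourguignon flow $\partial_tg=-2\mathrm{Ric}+2\rho Rg$ starting at $g_0$. Then $(Q_n,g_0)$ is of Heisenberg type, but the Heisenberg type property is not preserved along $g(t)$: for $t\ne0$ (with $1+ct>0$), the metric Lie algebra of $(Q_n,g(t))$ is not of Heisenberg type.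
   Context: $Q_n$ is the simply connected 2-step nilpotent Lie group whose Lie algebra has basis $X_{1l},X_{2l},X_{3l},X_{4l}$ ($1\le l\le n$), $Z_1,Z_2,Z_3$ with nonzero brackets $[X_{1l},X_{2l}]=-Z_1$, $[X_{1l},X_{3l}]=Z_3$, $[X_{1l},X_{4l}]=Z_2$, $[X_{2l},X_{3l}]=Z_2$, $[X_{2l},X_{4l}]=-Z_3$, $[X_{3l},X_{4l}]=-Z_1$; set $e_i=X_{1i}$, $e_{n+i}=X_{2i}$, $e_{2n+i}=X_{3i}$, $e_{3n+i}=X_{4i}$, $e_{4n+r}=Z_r$, and $g_\alpha=g(e_\alpha,e_\alpha)$. For a 2-step nilpotent Lie algebra with inner product, with center $\mathcal{Z}$ and $\mathcal{V}=\mathcal{Z}^\perp$, define $j(Z):\mathcal{V}\to\mathcal{V}$ for $Z\in\mathcal{Z}$ by $\langle j(Z)X,Y\rangle=\langle Z,[X,Y]\rangle$; the metric Lie algebra is of Heisenberg type if $j(Z)^2=-|Z|^2\mathrm{Id}$ for all $Z\in\mathcal{Z}$. Here $\mathcal{Z}=\mathrm{span}\{Z_1,Z_2,Z_3\}$ and $\mathcal{V}=\mathrm{span}\{e_1,\dots,e_{4n}\}$, with $j$ and norms taken with respect to $g(t)$. *)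

theory Defs
  imports Complex_Main
begin

(* Quaternion Lie algebra q_n with basis e_1..e_{4n+3}; vectors are functions nat => real,
   e_i = X_{1i}, e_{n+i} = X_{2i}, e_{2n+i} = X_{3i}, e_{3n+i} = X_{4i}, e_{4n+r} = Z_r. *)

(* coefficient of Z_r in [X_{k1 l}, X_{k2 l}] for k1 < k2 *)
definition qup :: "nat \<Rightarrow> nat \<Rightarrow> nat \<Rightarrow> real" where
  "qup k1 k2 r =
     (if (k1, k2) = (1, 2) then (if r = 1 then -1 else 0)
      else if (k1, k2) = (1, 3) then (if r = 3 then 1 else 0)
      else if (k1, k2) = (1, 4) then (if r = 2 then 1 else 0)
      else if (k1, k2) = (2, 3) then (if r = 2 then 1 else 0)
      else if (k1, k2) = (2, 4) then (if r = 3 then -1 else 0)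
      else if (k1, k2) = (3, 4) then (if r = 1 then -1 else 0)
      else 0)"

definition qconst :: "nat \<Rightarrow> nat \<Rightarrow> nat \<Rightarrow> real" where
  "qconst k1 k2 r = (if k1 < k2 then qup k1 k2 r else if k2 < k1 then - qup k2 k1 r else 0)"

definition qkind :: "nat \<Rightarrow> nat \<Rightarrow> nat" where "qkind n a = (a - 1) div n + 1"
definition qblock :: "nat \<Rightarrow> nat \<Rightarrow> nat" where "qblock n a = (a - 1) mod n"

definition qsc :: "nat \<Rightarrow> nat \<Rightarrow> nat \<Rightarrow> nat \<Rightarrow> real" where
  "qsc n a b r = (if a \<in> {1..4*n} \<and> b \<in> {1..4*n} \<and> qblock n a = qblock n b
                  then qconst (qkind n a) (qkind n b) r else 0)"

definition qbr :: "nat \<Rightarrow> (nat \<Rightarrow> real) \<Rightarrow> (nat \<Rightarrow> real) \<Rightarrow> (nat \<Rightarrow> real)" where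
  "qbr n x y = (\<lambda>i. if 4*n+1 \<le> i \<and> i \<le> 4*n+3 then
       (\<Sum>a\<in>{1..4*n}. \<Sum>b\<in>{1..4*n}. x a * y b * qsc n a b (i - 4*n)) else 0)"

definition qalg :: "nat \<Rightarrow> (nat \<Rightarrow> real) set" where
  "qalg n = {x. \<forall>i. x i \<noteq> 0 \<longrightarrow> 1 \<le> i \<and> i \<le> 4*n+3}"
definition qV :: "nat \<Rightarrow> (nat \<Rightarrow> real) set" where
  "qV n = {x. \<forall>i. x i \<noteq> 0 \<longrightarrow> 1 \<le> i \<and> i \<le> 4*n}"
definition qZ :: "nat \<Rightarrow> (nat \<Rightarrow> real) set" where
  "qZ n = {x. \<forall>i. x i \<noteq> 0 \<longrightarrow> 4*n+1 \<le> i \<and> i \<le> 4*n+3}"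

definition qip :: "nat \<Rightarrow> (nat \<Rightarrow> real) \<Rightarrow> (nat \<Rightarrow> real) \<Rightarrow> (nat \<Rightarrow> real) \<Rightarrow> real" where
  "qip n g x y = (\<Sum>\<alpha>\<in>{1..4*n+3}. g \<alpha> * x \<alpha> * y \<alpha>)"

definition qj :: "nat \<Rightarrow> (nat \<Rightarrow> real) \<Rightarrow> (nat \<Rightarrow> real) \<Rightarrow> (nat \<Rightarrow> real) \<Rightarrow> (nat \<Rightarrow> real)" where
  "qj n g Z X = (THE W. W \<in> qV n \<and> (\<forall>Y\<in>qV n. qip n g W Y = qip n g Z (qbr n X Y)))"

definition heisenberg_type :: "nat \<Rightarrow> (nat \<Rightarrow> real) \<Rightarrow> bool" where
  "heisenberg_type n g \<longleftrightarrow>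
     (\<forall>Z\<in>qZ n. \<forall>X\<in>qV n. qj n g Z (qj n g Z X) = (\<lambda>i. - qip n g Z Z * X i))"

end

theory Submission imports Defs begin

definition zC :: "real \<Rightarrow> real \<Rightarrow> real \<Rightarrow> nat \<Rightarrow> nat \<Rightarrow> real" where
  "zC z1 z2 z3 k k' = z1 * qconst k k' 1 + z2 * qconst k k' 2 + z3 * qconst k k' 3"

lemma zC_sq:
  assumes "k1 \<in> {1..4}" "k3 \<in> {1..4}"
  shows "(\<Sum>k\<in>{1..4}. zC z1 z2 z3 k1 k * zC z1 z2 z3 k k3)
       = - (z1^2 + z2^2 + z3^2) * (if k1 = k3 then 1 else 0)"
proof -
  have e: "{1..4::nat} = {1,2,3,4}" by auto
  from assms have "k1 \<in> {1,2,3,4}" "k3 \<in> {1,2,3,4}" by auto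
  then show ?thesis unfolding e
    by (auto simp: zC_def qconst_def qup_def power2_eq_square algebra_simps)
qed

lemma idx_facts:
  assumes "k \<in> {1..4::nat}" "l < n"
  shows "qkind n ((k-1)*n + l + 1) = k" "qblock n ((k-1)*n + l + 1) = l"
    "(k-1)*n + l + 1 \<in> {1..4*n}"
proof -
  have "((k-1)*n + l) div n = k - 1" using assms by simp
  then show "qkind n ((k-1)*n + l + 1) = k" using assms by (simp add: qkind_def)
  show "qblock n ((k-1)*n + l + 1) = l" using assms by (simp add: qblock_def)
  have "(k-1)*n + l + 1 \<le> 3*n + (n-1) + 1" using assms
    by (intro add_mono add_left_mono, auto)
  then show "(k-1)*n + l + 1 \<in> {1..4*n}" using assms by auto
qed

lemma decomp:
  assumes "\<beta> \<in> {1..4*n}"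
  shows "qkind n \<beta> \<in> {1..4}" "qblock n \<beta> < n" "\<beta> = (qkind n \<beta> - 1)*n + qblock n \<beta> + 1"
proof -
  have n: "n > 0" using assms by auto
  have "\<beta> - 1 < 4 * n" using assms by auto
  then have "(\<beta>-1) div n < 4" by (simp add: less_mult_imp_div_less)
  then show "qkind n \<beta> \<in> {1..4}" by (simp add: qkind_def)
  show "qblock n \<beta> < n" using n by (simp add: qblock_def)
  show "\<beta> = (qkind n \<beta> - 1)*n + qblock n \<beta> + 1" using assms
    by (simp add: qkind_def qblock_def)
qed

definition zM :: "nat \<Rightarrow> (nat \<Rightarrow> real) \<Rightarrow> nat \<Rightarrow> nat \<Rightarrow> real" where
  "zM n Z a b = Z (4*n+1) * qsc n a b 1 + Z (4*n+2) * qsc n a b 2 + Z (4*n+3) * qsc n a b 3"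

lemma zM_block:
  assumes "a \<in> {1..4*n}" "b \<in> {1..4*n}"
  shows "zM n Z a b = (if qblock n a = qblock n b
     then zC (Z (4*n+1)) (Z (4*n+2)) (Z (4*n+3)) (qkind n a) (qkind n b) else 0)"
  using assms by (simp add: zM_def qsc_def zC_def)

lemma reidx:
  fixes f :: "nat \<Rightarrow> real"
  assumes "l < n" "\<And>b. b \<in> {1..4*n} \<Longrightarrow> qblock n b \<noteq> l \<Longrightarrow> f b = 0"
  shows "(\<Sum>b\<in>{1..4*n}. f b) = (\<Sum>k\<in>{1..4}. f ((k-1)*n + l + 1))"
proof -
  let ?h = "\<lambda>k. (k-1)*n + l + 1"
  have sub: "?h ` {1..4} \<subseteq> {1..4*n}" using idx_facts(3)[OF _ assms(1)] by auto
  have "(\<Sum>b\<in>{1..4*n}. f b) = (\<Sum>b\<in>?h ` {1..4}. f b)"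
  proof (rule sum.mono_neutral_right[OF _ sub])
    show "finite {1..4*n}" by simp
    show "\<forall>i\<in>{1..4 * n} - ?h ` {1..4}. f i = 0"
    proof
      fix i assume i: "i \<in> {1..4 * n} - ?h ` {1..4}"
      show "f i = 0"
      proof (rule assms(2))
        show "i \<in> {1..4*n}" using i by auto
        show "qblock n i \<noteq> l"
        proof
          assume "qblock n i = l"
          then have "i = ?h (qkind n i)" using decomp[of i n] i by auto
          then show False using i decomp(1)[of i n] by auto
        qed
      qed
    qed
  qed
  also have "\<dots> = (\<Sum>k\<in>{1..4}. f (?h k))"
  proof (rule sum.reindex[unfolded comp_def])
    show "inj_on ?h {1..4}"
    proof
      fix x y assume "x \<in> {1..4::nat}" "y \<in> {1..4::nat}" "?h x = ?h y"
      then show "x = y" using idx_facts(1)[OF _ assms(1)] by metis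
    qed
  qed
  finally show ?thesis .
qed

lemma core:
  assumes a: "a \<in> {1..4*n}" and c: "c \<in> {1..4*n}"
  shows "(\<Sum>b\<in>{1..4*n}. zM n Z a b * zM n Z b c)
     = - (Z (4*n+1)^2 + Z (4*n+2)^2 + Z (4*n+3)^2) * (if a = c then 1 else 0)"
proof (cases "qblock n a = qblock n c")
  case False
  then have "a \<noteq> c" by auto
  moreover have "zM n Z a b * zM n Z b c = 0" if "b \<in> {1..4*n}" for b
    using zM_block[OF a that] zM_block[OF that c] False by auto
  ultimately show ?thesis by (simp add: sum.neutral)
next
  case True
  define l where "l = qblock n a"
  have l: "l < n" using decomp(2)[OF a] l_def by simp
  have "(\<Sum>b\<in>{1..4*n}. zM n Z a b * zM n Z b c)
      = (\<Sum>k\<in>{1..4}. zM n Z a ((k-1)*n + l + 1) * zM n Z ((k-1)*n + l + 1) c)"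
    by (rule reidx[OF l], use zM_block[OF a] l_def in auto)
  also have "\<dots> = (\<Sum>k\<in>{1..4}. zC (Z (4*n+1)) (Z (4*n+2)) (Z (4*n+3)) (qkind n a) k
        * zC (Z (4*n+1)) (Z (4*n+2)) (Z (4*n+3)) k (qkind n c))"
  proof (rule sum.cong[OF refl])
    fix k assume k: "k \<in> {1..4::nat}"
    show "zM n Z a ((k-1)*n + l + 1) * zM n Z ((k-1)*n + l + 1) c =
       zC (Z (4*n+1)) (Z (4*n+2)) (Z (4*n+3)) (qkind n a) k
        * zC (Z (4*n+1)) (Z (4*n+2)) (Z (4*n+3)) k (qkind n c)"
      using zM_block[OF a idx_facts(3)[OF k l]] zM_block[OF idx_facts(3)[OF k l] c]
        idx_facts(1,2)[OF k l] l_def True by simp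
  qed
  also have "\<dots> = - (Z (4*n+1)^2 + Z (4*n+2)^2 + Z (4*n+3)^2)
      * (if qkind n a = qkind n c then 1 else 0)"
    by (rule zC_sq[OF decomp(1)[OF a] decomp(1)[OF c]])
  also have "(qkind n a = qkind n c) = (a = c)"
    using decomp(3)[OF a] decomp(3)[OF c] True by metis
  finally show ?thesis .
qed

definition jc :: "nat \<Rightarrow> real \<Rightarrow> real \<Rightarrow> (nat \<Rightarrow> real) \<Rightarrow> (nat \<Rightarrow> real) \<Rightarrow> (nat \<Rightarrow> real)" where
  "jc n a b Z X = (\<lambda>c. if c \<in> {1..4*n} then b / a * (\<Sum>d\<in>{1..4*n}. X d * zM n Z d c) else 0)"

lemma ip_V:
  assumes "W \<in> qV n" "\<forall>i\<in>{1..4*n}. g i = a"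
  shows "qip n g W Y = (\<Sum>i\<in>{1..4*n}. a * W i * Y i)"
proof -
  have "qip n g W Y = (\<Sum>i\<in>{1..4*n}. g i * W i * Y i)"
    unfolding qip_def
    by (rule sum.mono_neutral_right) (use assms(1) in \<open>auto simp: qV_def\<close>)
  then show ?thesis using assms(2) by simp
qed

lemma ip_Zbr:
  assumes "\<forall>i\<in>{4*n+1..4*n+3}. g i = b"
  shows "qip n g Z (qbr n X Y) = b * (\<Sum>d\<in>{1..4*n}. \<Sum>e\<in>{1..4*n}. X d * Y e * zM n Z d e)"
proof -
  have sub: "{4*n+1..4*n+3} \<subseteq> {1..4*n+3}" by auto
  have "qip n g Z (qbr n X Y) = (\<Sum>i\<in>{4*n+1..4*n+3}. g i * Z i * qbr n X Y i)"
    unfolding qip_def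
    by (rule sum.mono_neutral_right[OF _ sub]) (auto simp: qbr_def)
  also have "{4*n+1..4*n+3} = {4*n+1, 4*n+2, 4*n+3}" by auto
  finally have "qip n g Z (qbr n X Y) = b * Z (4*n+1) * (\<Sum>d\<in>{1..4*n}. \<Sum>e\<in>{1..4*n}. X d * Y e * qsc n d e 1)
      + b * Z (4*n+2) * (\<Sum>d\<in>{1..4*n}. \<Sum>e\<in>{1..4*n}. X d * Y e * qsc n d e 2)
      + b * Z (4*n+3) * (\<Sum>d\<in>{1..4*n}. \<Sum>e\<in>{1..4*n}. X d * Y e * qsc n d e 3)"
    using assms by (simp add: qbr_def)
  then show ?thesis
    by (simp add: zM_def distrib_left sum.distrib sum_distrib_left algebra_simps)
qed

lemma qj_eq:
  assumes ga: "\<forall>i\<in>{1..4*n}. g i = a" and gb: "\<forall>i\<in>{4*n+1..4*n+3}. g i = b" and a: "a > 0"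
  shows "qj n g Z X = jc n a b Z X"
proof -
  let ?P = "\<lambda>W. W \<in> qV n \<and> (\<forall>Y\<in>qV n. qip n g W Y = qip n g Z (qbr n X Y))"
  have jV: "jc n a b Z X \<in> qV n" by (auto simp: qV_def jc_def)
  have "?P (jc n a b Z X)"
  proof (intro conjI ballI jV)
    fix Y
    have "qip n g (jc n a b Z X) Y = (\<Sum>e\<in>{1..4*n}. a * (b / a * (\<Sum>d\<in>{1..4*n}. X d * zM n Z d e)) * Y e)"
      using ip_V[OF jV ga] by (simp add: jc_def)
    also have "\<dots> = b * (\<Sum>e\<in>{1..4*n}. \<Sum>d\<in>{1..4*n}. X d * Y e * zM n Z d e)"
      using a by (simp add: sum_distrib_left sum_distrib_right algebra_simps)
    also have "\<dots> = b * (\<Sum>d\<in>{1..4*n}. \<Sum>e\<in>{1..4*n}. X d * Y e * zM n Z d e)"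
      by (subst sum.swap) simp
    also have "\<dots> = qip n g Z (qbr n X Y)" using ip_Zbr[OF gb] by simp
    finally show "qip n g (jc n a b Z X) Y = qip n g Z (qbr n X Y)" .
  qed
  moreover have "W = jc n a b Z X" if "?P W" for W
  proof
    fix c
    show "W c = jc n a b Z X c"
    proof (cases "c \<in> {1..4*n}")
      case False
      have "W c = 0" using that False unfolding qV_def by force
      then show ?thesis using False unfolding jc_def by auto
    next
      case True
      define E where "E = (\<lambda>i. if i = c then 1 else (0::real))"
      have E: "E \<in> qV n" using True by (auto simp: qV_def E_def)
      have "qip n g W E = a * W c" using ip_V[OF conjunct1[OF that] ga, of E] True
        by (simp add: E_def if_distrib sum.delta cong: if_cong)
      moreover have "qip n g (jc n a b Z X) E = a * jc n a b Z X c" using ip_V[OF jV ga, of E] True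
        by (simp add: E_def if_distrib sum.delta cong: if_cong)
      ultimately have "a * W c = a * jc n a b Z X c"
        using that \<open>?P (jc n a b Z X)\<close> E by metis
      then show ?thesis using a by simp
    qed
  qed
  ultimately show ?thesis unfolding qj_def by (rule the_equality)
qed

lemma jj:
  assumes X: "X \<in> qV n"
  shows "jc n a b Z (jc n a b Z X) = (\<lambda>c. - ((b / a) ^ 2) * (Z (4*n+1)^2 + Z (4*n+2)^2 + Z (4*n+3)^2) * X c)"
proof
  fix c
  let ?S = "Z (4*n+1)^2 + Z (4*n+2)^2 + Z (4*n+3)^2"
  show "jc n a b Z (jc n a b Z X) c = - ((b / a) ^ 2) * ?S * X c"
  proof (cases "c \<in> {1..4*n}")
    case False
    then have "X c = 0" using X unfolding qV_def by force
    then show ?thesis using False unfolding jc_def by auto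
  next
    case True
    have "jc n a b Z (jc n a b Z X) c = b / a * (\<Sum>e\<in>{1..4*n}. (b / a * (\<Sum>d\<in>{1..4*n}. X d * zM n Z d e)) * zM n Z e c)"
      using True by (simp add: jc_def)
    also have "\<dots> = (b / a) ^ 2 * (\<Sum>e\<in>{1..4*n}. \<Sum>d\<in>{1..4*n}. X d * (zM n Z d e * zM n Z e c))"
      by (simp add: sum_distrib_left sum_distrib_right power2_eq_square algebra_simps)
    also have "\<dots> = (b / a) ^ 2 * (\<Sum>d\<in>{1..4*n}. X d * (\<Sum>e\<in>{1..4*n}. zM n Z d e * zM n Z e c))"
      by (subst sum.swap) (simp add: sum_distrib_left)
    also have "\<dots> = (b / a) ^ 2 * (\<Sum>d\<in>{1..4*n}. X d * (- ?S * (if d = c then 1 else 0)))"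
      using core[OF _ True] by simp
    also have "\<dots> = - ((b / a) ^ 2) * ?S * X c"
      using True by (simp add: if_distrib sum.delta algebra_simps cong: if_cong)
    finally show ?thesis .
  qed
qed

lemma ipZZ:
  assumes Z: "Z \<in> qZ n" and gb: "\<forall>i\<in>{4*n+1..4*n+3}. g i = b"
  shows "qip n g Z Z = b * (Z (4*n+1)^2 + Z (4*n+2)^2 + Z (4*n+3)^2)"
proof -
  have sub: "{4*n+1..4*n+3} \<subseteq> {1..4*n+3}" by auto
  have "qip n g Z Z = (\<Sum>i\<in>{4*n+1..4*n+3}. g i * Z i * Z i)"
    unfolding qip_def
    by (rule sum.mono_neutral_right[OF _ sub]) (use Z in \<open>auto simp: qZ_def\<close>)
  also have "{4*n+1..4*n+3} = {4*n+1, 4*n+2, 4*n+3}" by auto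
  finally show ?thesis using gb by (simp add: power2_eq_square algebra_simps)
qed

lemma HT_iff:
  assumes ga: "\<forall>i\<in>{1..4*n}. g i = a" and gb: "\<forall>i\<in>{4*n+1..4*n+3}. g i = b"
    and a: "a > 0" and b: "b > 0" and n: "n \<ge> 1"
  shows "heisenberg_type n g \<longleftrightarrow> b = a^2"
proof
  assume H: "heisenberg_type n g"
  define Z where "Z = (\<lambda>i::nat. if i = 4*n+1 then 1 else (0::real))"
  define X where "X = (\<lambda>i::nat. if i = 1 then 1 else (0::real))"
  have Z: "Z \<in> qZ n" by (auto simp: qZ_def Z_def)
  have X: "X \<in> qV n" using n by (auto simp: qV_def X_def)
  have "qj n g Z (qj n g Z X) 1 = - qip n g Z Z * X 1"
    using H Z X unfolding heisenberg_type_def by metis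
  then have "- ((b / a) ^ 2) = - b"
    using qj_eq[OF ga gb a] jj[OF X] ipZZ[OF Z gb] n by (simp add: Z_def X_def)
  then have "b * b = b * a^2" using a by (simp add: field_simps power2_eq_square)
  then show "b = a^2" using b by simp
next
  assume ba: "b = a^2"
  show "heisenberg_type n g" unfolding heisenberg_type_def
  proof (intro ballI)
    fix Z X assume Z: "Z \<in> qZ n" and X: "X \<in> qV n"
    have "(b / a) ^ 2 = b" using ba a by (simp add: power2_eq_square)
    then show "qj n g Z (qj n g Z X) = (\<lambda>i. - qip n g Z Z * X i)"
      using qj_eq[OF ga gb a] jj[OF X] ipZZ[OF Z gb] by simp
  qed
qed

theorem proposition2p8:
  fixes n :: nat and \<rho> c :: real and g0 :: "nat \<Rightarrow> real" and g :: "real \<Rightarrow> nat \<Rightarrow> real"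
  assumes "n \<ge> 1"
    and "3 + real n - 3 * real n * \<rho> \<noteq> 0"
    and "\<forall>\<alpha>\<in>{1..4*n+3}. g0 \<alpha> > 0"
    and "\<forall>j\<in>{1..4*n}. g0 j = g0 1"
    and "g0 (4*n+2) = g0 (4*n+1)" and "g0 (4*n+3) = g0 (4*n+1)"
    and "(g0 1)^2 = g0 (4*n+1)"
    and c_def: "c = g0 (4*n+1) / (g0 1)^2 * (6 + 2 * real n - 6 * real n * \<rho>)"
    and g_def: "g = (\<lambda>t \<alpha>. if 1 \<le> \<alpha> \<and> \<alpha> \<le> 4*n then
                 g0 1 * (1 + c*t) powr (3 * (1 - 2 * real n * \<rho>) / (6 + 2 * real n - 6 * real n * \<rho>))
               else g0 (4*n+1) * (1 + c*t) powr (- real n * (1 + 3*\<rho>) / (3 + real n - 3 * real n * \<rho>)))"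
  shows "heisenberg_type n g0 \<and>
         (\<forall>t. t \<noteq> 0 \<and> 1 + c*t > 0 \<longrightarrow> \<not> heisenberg_type n (g t))"
proof -
  define a0 where "a0 = g0 1"
  define b0 where "b0 = g0 (4*n+1)"
  define D where "D = 3 + real n - 3 * real n * \<rho>"
  have n: "n \<ge> 1" using assms(1) .
  have D: "D \<noteq> 0" using assms(2) D_def by simp
  have a0: "a0 > 0" using assms(3) n a0_def by auto
  have b0: "b0 = a0^2" using assms(7) unfolding a0_def b0_def by simp
  have b0p: "b0 > 0" using b0 a0 by simp
  have gbset: "i \<in> {4*n+1..4*n+3} \<Longrightarrow> i = 4*n+1 \<or> i = 4*n+2 \<or> i = 4*n+3" for i by auto
  have H0: "heisenberg_type n g0"
  proof (rule HT_iff[THEN iffD2, of n g0 a0 b0])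
    show "\<forall>i\<in>{1..4*n}. g0 i = a0" using assms(4) unfolding a0_def by blast
    show "\<forall>i\<in>{4*n+1..4*n+3}. g0 i = b0" using gbset assms(5,6) b0_def by fastforce
  qed (use a0 b0p b0 n in auto)
  have Ht: "\<not> heisenberg_type n (g t)" if t: "t \<noteq> 0" "1 + c*t > 0" for t
  proof
    assume H: "heisenberg_type n (g t)"
    define x where "x = 1 + c*t"
    define p where "p = 3 * (1 - 2 * real n * \<rho>) / (6 + 2 * real n - 6 * real n * \<rho>)"
    define q where "q = - real n * (1 + 3*\<rho>) / (3 + real n - 3 * real n * \<rho>)"
    have x: "x > 0" using t x_def by simp
    have ga: "\<forall>i\<in>{1..4*n}. g t i = a0 * x powr p"
      using assms(9) a0_def x_def p_def by simp
    have gb: "\<forall>i\<in>{4*n+1..4*n+3}. g t i = b0 * x powr q"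
      using assms(9) b0_def x_def q_def by auto
    have "b0 * x powr q = (a0 * x powr p)^2"
      using HT_iff[OF ga gb _ _ n] H a0 b0p x by simp
    also have "\<dots> = b0 * (x powr p)^2" using b0 by (simp add: power_mult_distrib)
    also have "(x powr p)^2 = x powr (2*p)" using x
      by (simp add: power2_eq_square powr_add[symmetric])
    also have "2*p = q + 1" unfolding p_def q_def using D D_def
      by (simp add: field_simps)
    also have "x powr (q+1) = x powr q * x" using x by (simp add: powr_add)
    finally have "x = 1" using b0p x by simp
    then have "c * t = 0" using x_def by simp
    moreover have "c \<noteq> 0"
    proof -
      have "c = b0 / a0^2 * (2 * D)" using assms(8) unfolding b0_def a0_def D_def by simp
      then show ?thesis using b0p a0 D by simp
    qed
    ultimately show False using t by simp
  qed
  show ?thesis using H0 Ht by blast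
qed

end
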